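(* In the qubit–battery model with the "copy" interaction $U_{SB}$, let $\psi:[0,\infty)\to\mathbb C$ be twice continuously differentiable with $\psi(0)=0$, $\int_0^\infty|\psi(x)|^2dx=1$, and $|\psi(x)|+|\psi'(x)|+|\psi''(x)|\le C(1+x)^{-2}$ for some constant $C$. For $\delta>0$ let $|\beta^{(\delta)}\rangle_B=C_\delta\sum_{n\ge0}\psi(n\delta)|n\rangle_B$ with $C_\delta=(\sum_{n\ge0}|\psi(n\delta)|^2)^{-1/2}$. Then $$\lim_{\delta\to0^+}\frac{\epsilon_C(\mathbf\Phi_{|\beta^{(\delta)}\rangle},\mathcal V)}{\delta^2}=|V_{01}|^2\,\mathrm{UD}(\psi),\qquad \mathrm{UD}(\psi):=\int_0^\infty|\psi'(x)|^2\,dx .$$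
   Context: Qubit $S$ with energy basis $|0\rangle,|1\rangle$ and $H_S=\frac\omega2(|1\rangle\langle1|-|0\rangle\langle0|)$; battery $B$ with basis $\{|n\rangle\}_{n\ge0}$, $H_B=\omega\sum_n n|n\rangle\langle n|$. $V_S$ a qubit unitary, $V_{ij}=\langle i|V_S|j\rangle$, $\mathcal V(\cdot)=V_S\cdot V_S^\dagger$. "Copy" interaction: $U_{SB}=|0\rangle\langle0|_S\otimes|0\rangle\langle0|_B+\sum_{n\ge1}\sum_{i,j\in\{0,1\}}V_{ij}|i\rangle\langle j|_S\otimes|n-i\rangle\langle n-j|_B$. Channel $\mathbf\Phi_{|\beta\rangle}(\rho)=\mathrm{Tr}_B[U_{SB}(\rho\otimes|\beta\rangle\langle\beta|)U_{SB}^\dagger]$ with Kraus operators $K^{(n)}={}_B\langle n|U_{SB}|\beta\rangle$; Choi infidelity $\epsilon_C=1-\frac14\sum_n|\mathrm{Tr}[V_S^\dagger K^{(n)}]|^2$. *)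

theory Defs
  imports "HOL-Analysis.Analysis"
begin

text \<open>A qubit operator is represented by its matrix entries V i j = <i|V|j>, i,j in {0,1}.
  Battery basis states |n> are indexed by nat.  Product basis state |i>_S |n>_B is (i,n).\<close>

definition qubit_unitary :: "(nat \<Rightarrow> nat \<Rightarrow> complex) \<Rightarrow> bool" where
  "qubit_unitary V \<longleftrightarrow>
     (\<forall>i<2. \<forall>j<2. (\<Sum>k<2. cnj (V k i) * V k j) = (if i = j then 1 else 0))"

text \<open>Matrix entries <i,n| U_SB |j,m> of the copy interaction
  U_SB = |0><0| (x) |0><0| + sum_{k>=1} sum_{i,j} V_ij |i><j| (x) |k-i><k-j|.\<close>
definition USB :: "(nat \<Rightarrow> nat \<Rightarrow> complex) \<Rightarrow> nat \<times> nat \<Rightarrow> nat \<times> nat \<Rightarrow> complex" where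
  "USB V im jm' = (case im of (i, n) \<Rightarrow> case jm' of (j, m) \<Rightarrow>
     (if i = 0 \<and> n = 0 \<and> j = 0 \<and> m = 0 then 1 else 0)
     + (\<Sum>\<^sub>\<infinity>k\<in>{1..}. if i < 2 \<and> j < 2 \<and> n = k - i \<and> m = k - j then V i j else 0))"

text \<open>Kraus operator K^(n) = <n|_B U_SB |beta>_B, entries <i|K^(n)|j>;
  the battery state is given by its coefficients b m = <m|beta>.\<close>
definition kraus :: "(nat \<Rightarrow> nat \<Rightarrow> complex) \<Rightarrow> (nat \<Rightarrow> complex) \<Rightarrow> nat \<Rightarrow> nat \<Rightarrow> nat \<Rightarrow> complex" where
  "kraus V b n i j = (\<Sum>\<^sub>\<infinity>m. USB V (i, n) (j, m) * b m)"

definition choi_infidelity :: "(nat \<Rightarrow> nat \<Rightarrow> complex) \<Rightarrow> (nat \<Rightarrow> complex) \<Rightarrow> real" where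
  "choi_infidelity V b =
     1 - 1/4 * (\<Sum>\<^sub>\<infinity>n. (cmod (\<Sum>i<2. \<Sum>j<2. cnj (V i j) * kraus V b n i j))^2)"

definition beta_state :: "(real \<Rightarrow> complex) \<Rightarrow> real \<Rightarrow> nat \<Rightarrow> complex" where
  "beta_state \<psi> \<delta> n =
     complex_of_real (1 / sqrt (\<Sum>k. (cmod (\<psi> (real k * \<delta>)))^2)) * \<psi> (real n * \<delta>)"

definition UD :: "(real \<Rightarrow> complex) \<Rightarrow> real" where
  "UD \<psi>' = integral {0..} (\<lambda>x. (cmod (\<psi>' x))^2)"

end

theory Submission
  imports Defs
begin

lemma infsum_single_pt:
  fixes f :: "'a \<Rightarrow> 'b::{comm_monoid_add,t2_space}"
  assumes "\<And>x. x \<in> A \<Longrightarrow> x \<noteq> a \<Longrightarrow> f x = 0"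
  shows "infsum f A = (if a \<in> A then f a else 0)"
proof -
  have "infsum f A = infsum f (A \<inter> {a})"
    by (rule infsum_cong_neutral) (use assms in auto)
  also have "\<dots> = (if a \<in> A then f a else 0)"
    by (cases "a \<in> A") auto
  finally show ?thesis .
qed

lemma USB_eq:
  assumes "i < 2" "j < 2"
  shows "USB V (i, n) (j, m) = (if i = 0 \<and> n = 0 \<and> j = 0 \<and> m = 0 then 1 else 0)
     + (if 1 \<le> n + i \<and> m = n + i - j then V i j else 0)"
proof -
  have "(\<Sum>\<^sub>\<infinity>k\<in>{1..}. if i < 2 \<and> j < 2 \<and> n = k - i \<and> m = k - j then V i j else 0)
      = (if n + i \<in> {1..} then (if i < 2 \<and> j < 2 \<and> n = (n+i) - i \<and> m = (n+i) - j then V i j else 0) else 0)"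
    by (rule infsum_single_pt) (use assms in \<open>auto simp: less_2_cases_iff\<close>)
  then show ?thesis unfolding USB_def using assms by auto
qed

lemma kraus_eq:
  assumes "i < 2" "j < 2"
  shows "kraus V b n i j = (if i = 0 \<and> j = 0 \<and> n = 0 then b 0
      else (if 1 \<le> n + i then V i j * b (n + i - j) else 0))"
proof (cases "i = 0 \<and> j = 0 \<and> n = 0")
  case True
  have "kraus V b n i j = (if (0::nat) \<in> UNIV then USB V (i, n) (j, 0) * b 0 else 0)"
    unfolding kraus_def by (rule infsum_single_pt) (use True USB_eq in auto)
  then show ?thesis using True by (simp add: USB_eq)
next
  case False
  have "kraus V b n i j = (if (n+i-j) \<in> UNIV then USB V (i, n) (j, n+i-j) * b (n+i-j) else 0)"
    unfolding kraus_def by (rule infsum_single_pt) (use False assms USB_eq in auto)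
  then show ?thesis using False assms by (auto simp add: USB_eq)
qed

lemma unitary_facts:
  assumes "qubit_unitary V"
  shows "(cmod (V 1 0))^2 = (cmod (V 0 1))^2"
    "(cmod (V 0 0))^2 + (cmod (V 1 1))^2 = 2 - 2 * (cmod (V 0 1))^2"
proof -
  have cm: "cnj z * z = complex_of_real ((cmod z)^2)" for z
    using complex_norm_square[of z] by (simp add: mult.commute)
  have u00: "cnj (V 0 0) * V 0 0 + cnj (V 1 0) * V 1 0 = 1"
    using assms unfolding qubit_unitary_def by (auto dest!: spec[of _ 0] simp: numeral_2_eq_2)
  have u11: "cnj (V 0 1) * V 0 1 + cnj (V 1 1) * V 1 1 = 1"
    using assms unfolding qubit_unitary_def by (auto dest!: spec[of _ 1] simp: numeral_2_eq_2)
  have u01: "cnj (V 0 0) * V 0 1 + cnj (V 1 0) * V 1 1 = 0"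
    using assms unfolding qubit_unitary_def
    by (auto dest!: spec[of _ 0] spec[of _ 1] simp: numeral_2_eq_2)
  define a where "a = (cmod (V 0 0))^2"
  define c where "c = (cmod (V 1 0))^2"
  define p where "p = (cmod (V 0 1))^2"
  define q where "q = (cmod (V 1 1))^2"
  have e1: "a + c = 1" using u00 unfolding a_def c_def cm
    by (metis of_real_add of_real_eq_1_iff)
  have e2: "p + q = 1" using u11 unfolding p_def q_def cm
    by (metis of_real_add of_real_eq_1_iff)
  have "cnj (V 0 0) * V 0 1 = - (cnj (V 1 0) * V 1 1)" using u01
    by (simp add: eq_neg_iff_add_eq_0)
  then have "cmod (cnj (V 0 0) * V 0 1) ^2 = cmod (cnj (V 1 0) * V 1 1) ^ 2" by simp
  then have e3: "a * p = c * q" unfolding a_def c_def p_def q_def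
    by (simp add: norm_mult power_mult_distrib)
  have "a * p = (1 - a) * (1 - p)" proof -
    have "c = 1 - a" "q = 1 - p" using e1 e2 by auto
    then show ?thesis using e3 by simp
  qed
  then have "a + p = 1" by (simp add: algebra_simps)
  then have "c = p" using e1 by simp
  then show "(cmod (V 1 0))^2 = (cmod (V 0 1))^2" "(cmod (V 0 0))^2 + (cmod (V 1 1))^2 = 2 - 2 * (cmod (V 0 1))^2"
    using e1 e2 unfolding a_def c_def p_def q_def by auto
qed

lemma cnj_mult_self': "cnj z * z = complex_of_real ((cmod z)^2)"
  using complex_norm_square[of z] by (simp add: mult.commute)

lemma trace_eq:
  assumes U: "qubit_unitary V" and b0: "b 0 = 0"
  shows "(\<Sum>i<2. \<Sum>j<2. cnj (V i j) * kraus V b n i j)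
     = 2 * b n + complex_of_real ((cmod (V 0 1))^2) * ((if n = 0 then 0 else b (n - 1)) - 2 * b n + b (Suc n))"
proof -
  note uf = unitary_facts[OF U]
  have uc1: "complex_of_real ((cmod (V 1 0))^2) = complex_of_real ((cmod (V 0 1))^2)"
    using uf(1) by simp
  have uc2: "complex_of_real ((cmod (V 0 0))^2) + complex_of_real ((cmod (V 1 1))^2)
      = 2 - 2 * complex_of_real ((cmod (V 0 1))^2)"
    using arg_cong[OF uf(2), of complex_of_real] by simp
  have s: "(\<Sum>i<2. \<Sum>j<2. cnj (V i j) * kraus V b n i j) =
     cnj (V 0 0) * kraus V b n 0 0 + cnj (V 0 1) * kraus V b n 0 1
     + cnj (V 1 0) * kraus V b n 1 0 + cnj (V 1 1) * kraus V b n 1 1"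
    by (simp add: numeral_2_eq_2)
  show ?thesis
  proof (cases n)
    case 0
    have "(\<Sum>i<2. \<Sum>j<2. cnj (V i j) * kraus V b n i j) = (cnj (V 1 0) * V 1 0) * b 1"
      unfolding s using 0 b0 by (simp add: kraus_eq)
    then show ?thesis using 0 b0 uc1 by (simp add: cnj_mult_self')
  next
    case (Suc m)
    have "(\<Sum>i<2. \<Sum>j<2. cnj (V i j) * kraus V b n i j) =
      (cnj (V 0 0) * V 0 0 + cnj (V 1 1) * V 1 1) * b n + (cnj (V 0 1) * V 0 1) * b m
      + (cnj (V 1 0) * V 1 0) * b (Suc n)"
      unfolding s using Suc by (simp add: kraus_eq algebra_simps)
    also have "\<dots> = (2 - 2 * complex_of_real ((cmod (V 0 1))^2)) * b n
       + complex_of_real ((cmod (V 0 1))^2) * b m + complex_of_real ((cmod (V 0 1))^2) * b (Suc n)"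
      unfolding cnj_mult_self' uc2 uc1 by simp
    finally show ?thesis using Suc by (simp add: algebra_simps)
  qed
qed

lemma sq_identity:
  fixes b x y :: complex and p :: real
  shows "(cmod (2 * b + complex_of_real p * (x - 2 * b + y)))^2 =
    4 * (cmod b)^2 + 2 * p * ((cmod y)^2 + (cmod x)^2 - 2 * (cmod b)^2 - (cmod (y - b))^2 - (cmod (x - b))^2)
    + p^2 * (cmod (x - 2 * b + y))^2"
  unfolding cmod_power2 by (simp add: power2_eq_square algebra_simps)

definition shiftb :: "(nat \<Rightarrow> complex) \<Rightarrow> nat \<Rightarrow> complex" where
  "shiftb b n = (if n = 0 then 0 else b (n - 1))"

lemma cmod_sq_diff_le: "(cmod (u - v))^2 \<le> 2 * (cmod u)^2 + 2 * (cmod v)^2"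
proof -
  have "cmod (u - v) \<le> cmod u + cmod v" by (rule norm_triangle_ineq4)
  then have "(cmod (u - v))^2 \<le> (cmod u + cmod v)^2" by (simp add: power_mono)
  also have "\<dots> \<le> 2 * (cmod u)^2 + 2 * (cmod v)^2"
    using sum_squares_ge_zero[of "cmod u - cmod v" 0] by (simp add: power2_eq_square algebra_simps)
  finally show ?thesis .
qed

lemma cmod_sq_sum3_le: "(cmod (u + v + w))^2 \<le> 3 * ((cmod u)^2 + (cmod v)^2 + (cmod w)^2)"
proof -
  have "cmod (u + v + w) \<le> cmod u + cmod v + cmod w"
    by (metis add_mono norm_triangle_ineq order_trans order_refl)
  then have "(cmod (u + v + w))^2 \<le> (cmod u + cmod v + cmod w)^2" by (simp add: power_mono)
  also have "\<dots> \<le> 3 * ((cmod u)^2 + (cmod v)^2 + (cmod w)^2)"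
  proof -
    have "0 \<le> (cmod u - cmod v)^2 + (cmod v - cmod w)^2 + (cmod u - cmod w)^2" by simp
    then show ?thesis by (simp add: power2_eq_square algebra_simps)
  qed
  finally show ?thesis .
qed

lemma choi_formula:
  assumes U: "qubit_unitary V" and b0: "b 0 = 0" and sb: "summable (\<lambda>n. (cmod (b n))^2)"
  shows "choi_infidelity V b = 1 - (\<Sum>n. (cmod (b n))^2)
     + (cmod (V 0 1))^2 * (\<Sum>n. (cmod (b (Suc n) - b n))^2)
     - ((cmod (V 0 1))^2)^2 / 4 * (\<Sum>n. (cmod (shiftb b n - 2 * b n + b (Suc n)))^2)"
proof -
  define p where "p = (cmod (V 0 1))^2"
  define B where "B = (\<Sum>n. (cmod (b n))^2)"
  define E where "E = (\<Sum>n. (cmod (b (Suc n) - b n))^2)"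
  define D where "D = (\<Sum>n. (cmod (shiftb b n - 2 * b n + b (Suc n)))^2)"
  have sbS: "summable (\<lambda>n. (cmod (b (Suc n)))^2)"
    using sb summable_Suc_iff[of "\<lambda>n. (cmod (b n))^2"] by simp
  have sbm: "summable (\<lambda>n. (cmod (shiftb b n))^2)"
    using sb summable_Suc_iff[of "\<lambda>n. (cmod (shiftb b n))^2"] by (simp add: shiftb_def)
  have sE: "summable (\<lambda>n. (cmod (b (Suc n) - b n))^2)"
    by (rule summable_comparison_test[OF _ summable_add[OF summable_mult[OF sbS, of 2] summable_mult[OF sb, of 2]]])
       (auto intro: cmod_sq_diff_le)
  have sD: "summable (\<lambda>n. (cmod (shiftb b n - 2 * b n + b (Suc n)))^2)"
  proof (rule summable_comparison_test[OF _ summable_mult[OF summable_add[OF summable_add[OF sbm summable_mult[OF sb, of 4]] sbS], of 3]])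
    show "\<exists>N. \<forall>n\<ge>N. norm ((cmod (shiftb b n - 2 * b n + b (Suc n)))\<^sup>2)
       \<le> 3 * ((cmod (shiftb b n))\<^sup>2 + 4 * (cmod (b n))\<^sup>2 + (cmod (b (Suc n)))\<^sup>2)"
    proof (intro exI allI impI)
      fix n
      have "(cmod (shiftb b n + (- 2 * b n) + b (Suc n)))^2
        \<le> 3 * ((cmod (shiftb b n))^2 + (cmod (- 2 * b n))^2 + (cmod (b (Suc n)))^2)"
        by (rule cmod_sq_sum3_le)
      then show "norm ((cmod (shiftb b n - 2 * b n + b (Suc n)))\<^sup>2)
       \<le> 3 * ((cmod (shiftb b n))\<^sup>2 + 4 * (cmod (b n))\<^sup>2 + (cmod (b (Suc n)))\<^sup>2)"
        by (simp add: norm_mult power_mult_distrib)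
    qed
  qed
  have h0: "(\<lambda>n. (cmod (b n))^2) sums B" using sb B_def by (simp add: summable_sums)
  have h1: "(\<lambda>n. (cmod (b (Suc n)))^2) sums B"
    using h0 sums_Suc_iff[of "\<lambda>n. (cmod (b n))^2" B] b0 by simp
  have h2: "(\<lambda>n. (cmod (shiftb b n))^2) sums B"
    using h0 sums_Suc_iff[of "\<lambda>n. (cmod (shiftb b n))^2" B] by (simp add: shiftb_def)
  have h3: "(\<lambda>n. (cmod (b (Suc n) - b n))^2) sums E" using sE E_def by (simp add: summable_sums)
  have h4: "(\<lambda>n. (cmod (shiftb b n - b n))^2) sums E"
    using h3 sums_Suc_iff[of "\<lambda>n. (cmod (shiftb b n - b n))^2" E] b0
    by (simp add: shiftb_def norm_minus_commute)
  have h5: "(\<lambda>n. (cmod (shiftb b n - 2 * b n + b (Suc n)))^2) sums D" using sD D_def by (simp add: summable_sums)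
  have hs: "(\<lambda>n. 4 * (cmod (b n))^2 + 2 * p * ((cmod (b (Suc n)))^2 + (cmod (shiftb b n))^2
      - 2 * (cmod (b n))^2 - (cmod (b (Suc n) - b n))^2 - (cmod (shiftb b n - b n))^2)
      + p^2 * (cmod (shiftb b n - 2 * b n + b (Suc n)))^2)
     sums (4 * B + 2 * p * (B + B - 2 * B - E - E) + p^2 * D)"
    by (intro sums_add sums_mult sums_diff h0 h1 h2 h3 h4 h5)
  have tr: "(cmod (\<Sum>i<2. \<Sum>j<2. cnj (V i j) * kraus V b n i j))^2 =
     4 * (cmod (b n))^2 + 2 * p * ((cmod (b (Suc n)))^2 + (cmod (shiftb b n))^2
      - 2 * (cmod (b n))^2 - (cmod (b (Suc n) - b n))^2 - (cmod (shiftb b n - b n))^2)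
      + p^2 * (cmod (shiftb b n - 2 * b n + b (Suc n)))^2" for n
    unfolding trace_eq[of V b, OF U b0] p_def sq_identity shiftb_def[symmetric] ..
  have "((\<lambda>n. (cmod (\<Sum>i<2. \<Sum>j<2. cnj (V i j) * kraus V b n i j))^2) has_sum
      (4 * B + 2 * p * (B + B - 2 * B - E - E) + p^2 * D)) UNIV"
    unfolding tr by (rule sums_nonneg_imp_has_sum[OF hs]) (metis tr zero_le_power2)
  then have "(\<Sum>\<^sub>\<infinity>n. (cmod (\<Sum>i<2. \<Sum>j<2. cnj (V i j) * kraus V b n i j))^2)
      = 4 * B + 2 * p * (B + B - 2 * B - E - E) + p^2 * D"
    by (rule infsumI)
  then show ?thesis unfolding choi_infidelity_def B_def[symmetric] E_def[symmetric] D_def[symmetric] p_def[symmetric]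
    by (simp add: algebra_simps)
qed

lemma mv_bound:
  fixes f f' :: "real \<Rightarrow> 'a::real_normed_vector"
  assumes ab: "a \<le> b"
    and der: "\<And>x. x \<in> {a..b} \<Longrightarrow> (f has_vector_derivative f' x) (at x within {a..b})"
    and bd: "\<And>x. x \<in> {a..b} \<Longrightarrow> norm (f' x) \<le> M"
  shows "norm (f b - f a) \<le> M * (b - a)"
proof -
  have M0: "0 \<le> M" using bd[of a] ab by (meson atLeastAtMost_iff norm_ge_zero order_trans order_refl)
  have "norm (f b - f a) \<le> M * norm (b - a)"
  proof (rule differentiable_bound[where S="{a..b}" and f'="\<lambda>x h. h *\<^sub>R f' x"])
    show "convex {a..b}" by simp
    show "(f has_derivative (\<lambda>h. h *\<^sub>R f' x)) (at x within {a..b})" if "x \<in> {a..b}" for x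
      using der[OF that] by (simp add: has_vector_derivative_def)
    show "onorm (\<lambda>h. h *\<^sub>R f' x) \<le> M" if "x \<in> {a..b}" for x
    proof (rule onorm_bound[OF M0])
      fix h :: real
      show "norm (h *\<^sub>R f' x) \<le> M * norm h"
        using mult_left_mono[OF bd[OF that] abs_ge_zero[of h]] by (simp add: mult.commute)
    qed
  qed (use ab in auto)
  then show ?thesis using ab by simp
qed

lemma partial_inv_sq:
  fixes d :: real
  assumes d: "0 < d"
  shows "(\<Sum>n<N. 1 / (1 + real n * d)^2) \<le> (1 + d) / d * (1 - 1 / (1 + real N * d))"
proof (induction N)
  case 0
  then show ?case by simp
next
  case (Suc N)
  define x where "x = 1 + real N * d"
  have x1: "x \<ge> 1" using d by (simp add: x_def)
  have xs: "1 + real (Suc N) * d = x + d" by (simp add: x_def algebra_simps)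
  have key: "1 / x^2 \<le> (1 + d) / d * (1 / x - 1 / (x + d))"
  proof -
    have "1 / x - 1 / (x + d) = d / (x * (x + d))" using x1 d by (simp add: field_simps)
    then have "(1 + d) / d * (1 / x - 1 / (x + d)) = (1 + d) / (x * (x + d))"
      using d by simp
    also have "\<dots> \<ge> 1 / x^2"
    proof -
      have "x \<le> x * x" using x1 by (simp add: mult_le_cancel_left1)
      then have "d * x \<le> d * (x * x)" using d by (intro mult_left_mono) auto
      then have "x * (x + d) \<le> (1 + d) * x^2" by (simp add: power2_eq_square algebra_simps)
      then have "(1 + d) / ((1 + d) * x^2) \<le> (1 + d) / (x * (x + d))"
        using x1 d by (intro divide_left_mono) auto
      then show ?thesis using d by simp
    qed
    finally show ?thesis .
  qed
  have "(\<Sum>n<Suc N. 1 / (1 + real n * d)^2) = (\<Sum>n<N. 1 / (1 + real n * d)^2) + 1 / x^2"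
    by (simp add: x_def)
  also have "\<dots> \<le> (1 + d) / d * (1 - 1 / x) + (1 + d) / d * (1 / x - 1 / (x + d))"
    using Suc.IH key by (simp add: x_def)
  also have "\<dots> = (1 + d) / d * ((1 - 1 / x) + (1 / x - 1 / (x + d)))"
    by (simp only: distrib_left)
  also have "\<dots> = (1 + d) / d * (1 - 1 / (1 + real (Suc N) * d))"
    by (simp add: x_def algebra_simps)
  finally show ?case .
qed

lemma inv_sq_summable:
  fixes d :: real
  assumes d: "0 < d"
  shows "summable (\<lambda>n. 1 / (1 + real n * d)^2)" "(\<Sum>n. 1 / (1 + real n * d)^2) \<le> (1 + d) / d"
proof -
  have pb: "(\<Sum>n<N. 1 / (1 + real n * d)^2) \<le> (1 + d) / d" for N
  proof -
    have "0 \<le> 1 / (1 + real N * d)" using d by simp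
    then have "(1 + d) / d * (1 - 1 / (1 + real N * d)) \<le> (1 + d) / d"
      using d by (intro mult_left_le) auto
    then show ?thesis using partial_inv_sq[OF d, of N] by linarith
  qed
  show s: "summable (\<lambda>n. 1 / (1 + real n * d)^2)"
    by (rule summableI_nonneg_bounded[where x="(1+d)/d"]) (use pb in auto)
  show "(\<Sum>n. 1 / (1 + real n * d)^2) \<le> (1 + d) / d"
    by (rule suminf_le_const[OF s]) (use pb in auto)
qed

lemma mc_lemma:
  fixes f :: "real \<Rightarrow> real"
  assumes nn: "\<And>x. 0 \<le> x \<Longrightarrow> 0 \<le> f x"
    and intv: "\<And>b. f integrable_on {0..b}"
    and d: "0 < d"
    and bd: "\<And>N. integral {0..real N * d} f \<le> Bd"
  shows "f integrable_on {0..} \<and> ((\<lambda>N. integral {0..real N * d} f) \<longlonglongrightarrow> integral {0..} f)"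
proof -
  define g where "g = (\<lambda>N::nat. \<lambda>x::real. if x \<in> {..real N * d} then f x else 0)"
  have gi: "integral {0..} (g N) = integral {0..real N * d} f" for N
    unfolding g_def integral_restrict_Int by (simp add: Int_commute atLeastAtMost_def)
  have "f integrable_on {0..} \<and> ((\<lambda>N. integral {0..} (g N)) \<longlonglongrightarrow> integral {0..} f)"
  proof (rule monotone_convergence_increasing)
    show "g N integrable_on {0..}" for N
      unfolding g_def integrable_restrict_Int
      using intv[of "real N * d"] by (simp add: Int_commute atLeastAtMost_def)
    show "g N x \<le> g (Suc N) x" if "x \<in> {0..}" for N x
    proof -
      have "real N * d \<le> real (Suc N) * d" using d by simp
      then show ?thesis using that nn[of x] by (auto simp: g_def)
    qed
    show "(\<lambda>N. g N x) \<longlonglongrightarrow> f x" if "x \<in> {0..}" for x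
    proof -
      obtain M where M: "x / d \<le> real M" using real_arch_simple by blast
      have "eventually (\<lambda>N. g N x = f x) sequentially"
        unfolding eventually_sequentially
      proof (intro exI allI impI)
        fix N assume "M \<le> N"
        then have "x / d \<le> real N" using M by linarith
        then have "x \<le> real N * d" using d by (simp add: divide_le_eq)
        then show "g N x = f x" by (simp add: g_def)
      qed
      then show ?thesis by (rule tendsto_eventually)
    qed
    show "bounded (range (\<lambda>N. integral {0..} (g N)))"
    proof -
      have "\<bar>integral {0..} (g N)\<bar> \<le> Bd" for N
      proof -
        have "0 \<le> integral {0..real N * d} f"
          by (rule integral_nonneg[OF intv]) (use nn in auto)
        then show ?thesis using bd[of N] gi[of N] by simp
      qed
      then show ?thesis unfolding bounded_iff by (auto intro!: exI[of _ Bd])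
    qed
  qed
  then show ?thesis unfolding gi .
qed

lemma abs_suminf_le:
  fixes f g :: "nat \<Rightarrow> real"
  assumes "summable g" "\<And>n. \<bar>f n\<bar> \<le> g n"
  shows "summable f" "\<bar>suminf f\<bar> \<le> suminf g"
proof -
  have sa: "summable (\<lambda>n. \<bar>f n\<bar>)"
    by (rule summable_comparison_test[OF _ assms(1)]) (use assms(2) in auto)
  then show "summable f" by (rule summable_rabs_cancel)
  have "\<bar>suminf f\<bar> \<le> (\<Sum>n. \<bar>f n\<bar>)" by (rule summable_rabs[OF sa])
  also have "\<dots> \<le> suminf g" by (rule suminf_le[OF assms(2) sa assms(1)])
  finally show "\<bar>suminf f\<bar> \<le> suminf g" .
qed

lemma riemann:
  fixes f :: "real \<Rightarrow> real" and K :: real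
  assumes nn: "\<And>x. 0 \<le> x \<Longrightarrow> 0 \<le> f x"
    and cont: "continuous_on {0..} f"
    and bnd: "\<And>x. 0 \<le> x \<Longrightarrow> f x \<le> K / (1 + x)^2"
    and lip: "\<And>x y. 0 \<le> x \<Longrightarrow> x \<le> y \<Longrightarrow> y \<le> x + 1 \<Longrightarrow> \<bar>f y - f x\<bar> \<le> K * (y - x) / (1 + x)^2"
  shows "f integrable_on {0..}"
    and "\<And>d. 0 < d \<Longrightarrow> summable (\<lambda>n. f (real n * d))"
    and "((\<lambda>d. d * (\<Sum>n. f (real n * d))) \<longlongrightarrow> integral {0..} f) (at_right 0)"
proof -
  have K0: "0 \<le> K" using nn[of 0] bnd[of 0] by simp
  have intv: "f integrable_on {a..b}" if "0 \<le> a" for a b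
    by (rule integrable_continuous_interval, rule continuous_on_subset[OF cont]) (use that in auto)
  have intv0: "f integrable_on {0..b}" for b using intv[of 0 b] by simp
  show summ: "summable (\<lambda>n. f (real n * d))" if d: "0 < d" for d
  proof (rule summable_comparison_test[OF _ summable_mult[OF inv_sq_summable(1)[OF d], of K]])
    show "\<exists>N. \<forall>n\<ge>N. norm (f (real n * d)) \<le> K * (1 / (1 + real n * d)\<^sup>2)"
      using bnd nn d by simp
  qed
  define a where "a = (\<lambda>d::real. \<lambda>n::nat. integral {real n * d..real (Suc n) * d} f)"
  have loc: "\<bar>d * f (real n * d) - a d n\<bar> \<le> K * d^2 / (1 + real n * d)^2"
    if d: "0 < d" "d \<le> 1" for d n
  proof -
    define x0 where "x0 = real n * d"
    have x0: "0 \<le> x0" using d by (simp add: x0_def)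
    have e: "real (Suc n) * d = x0 + d" by (simp add: x0_def algebra_simps)
    have hi: "((\<lambda>x. f x - f x0) has_integral (a d n - f x0 * d)) {x0..x0 + d}"
    proof -
      have "a d n = integral {x0..x0+d} f" unfolding a_def e x0_def ..
      then have "(f has_integral a d n) {x0..x0+d}"
        using intv[OF x0, of "x0+d"] by (simp add: integrable_integral)
      moreover have "((\<lambda>x. f x0) has_integral f x0 * d) {x0..x0 + d}"
        using has_integral_const_real[of "f x0" x0 "x0+d"] d by (simp add: mult.commute)
      ultimately show ?thesis by (rule has_integral_diff)
    qed
    have B0: "0 \<le> K * d / (1 + x0)^2" using K0 d by simp
    have bx: "norm (f x - f x0) \<le> K * d / (1 + x0)\<^sup>2" if "x \<in> {x0..x0 + d} - {}" for x
    proof -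
      have "\<bar>f x - f x0\<bar> \<le> K * (x - x0) / (1 + x0)^2" using that d x0 by (intro lip) auto
      also have "\<dots> \<le> K * d / (1 + x0)^2" using that K0 by (intro divide_right_mono mult_left_mono) auto
      finally show ?thesis by simp
    qed
    have "norm (a d n - f x0 * d) \<le> (K * d / (1 + x0)^2) * d"
      using has_integral_bound_real[OF B0 finite.emptyI hi bx] d by (simp add: content_real)
    then show ?thesis using d by (simp add: x0_def power2_eq_square abs_minus_commute mult.commute mult.left_commute)
  qed
  have comb: "(\<Sum>n<N. a d n) = integral {0..real N * d} f" if d: "0 < d" for d N
  proof (induction N)
    case 0 then show ?case by simp
  next
    case (Suc N)
    have "integral {0..real N * d} f + integral {real N * d..real (Suc N) * d} f = integral {0..real (Suc N) * d} f"
      by (rule Henstock_Kurzweil_Integration.integral_combine[OF _ _ intv0]) (use d in auto)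
    then show ?case using Suc by (simp add: a_def)
  qed
  have err: "\<bar>d * (\<Sum>n. f (real n * d)) - integral {0..} f\<bar> \<le> K * d * (1 + d)"
    and fint: "f integrable_on {0..}"
    if d: "0 < d" "d \<le> 1" for d
  proof -
    have sK: "summable (\<lambda>n. K * d^2 * (1 / (1 + real n * d)^2))"
      by (rule summable_mult[OF inv_sq_summable(1)]) (use d in auto)
    have sdf: "summable (\<lambda>n. d * f (real n * d))" by (rule summable_mult[OF summ]) (use d in auto)
    have pb: "integral {0..real N * d} f \<le> K * (1 + d)^2" for N
    proof -
      have "integral {0..real N * d} f = (\<Sum>n<N. a d n)" using comb d by simp
      also have "\<dots> \<le> (\<Sum>n<N. (K * d + K * d^2) * (1 / (1 + real n * d)^2))"
      proof (rule sum_mono)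
        fix n assume "n \<in> {..<N}"
        have "a d n \<le> d * f (real n * d) + K * d^2 / (1 + real n * d)^2" using loc[OF d, of n] by linarith
        also have "d * f (real n * d) \<le> d * (K / (1 + real n * d)^2)"
          using bnd[of "real n * d"] d by (intro mult_left_mono) auto
        finally show "a d n \<le> (K * d + K * d^2) * (1 / (1 + real n * d)^2)"
          by (simp add: algebra_simps add_divide_distrib)
      qed
      also have "\<dots> = (K * d + K * d^2) * (\<Sum>n<N. 1 / (1 + real n * d)^2)"
        by (simp add: sum_distrib_left)
      also have "\<dots> \<le> (K * d + K * d^2) * ((1 + d) / d)"
      proof (rule mult_left_mono)
        show "(\<Sum>n<N. 1 / (1 + real n * d)^2) \<le> (1 + d) / d"
          using inv_sq_summable(1)[OF d(1)] inv_sq_summable(2)[OF d(1)]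
          by (meson order_trans sum_le_suminf finite_lessThan zero_le_divide_1_iff zero_le_power2)
      qed (use K0 d in auto)
      also have "\<dots> = K * (1 + d)^2" using d by (simp add: field_simps power2_eq_square)
      finally show ?thesis .
    qed
    have mc: "f integrable_on {0..} \<and> ((\<lambda>N. integral {0..real N * d} f) \<longlonglongrightarrow> integral {0..} f)"
      by (rule mc_lemma[OF nn intv0 d(1) pb])
    then show "f integrable_on {0..}" by simp
    have asums: "a d sums integral {0..} f"
      unfolding sums_def using mc comb[OF d(1)] by simp
    have "\<bar>(\<Sum>n. d * f (real n * d) - a d n)\<bar> \<le> (\<Sum>n. K * d^2 * (1 / (1 + real n * d)^2))"
      by (rule abs_suminf_le(2)[OF sK]) (use loc[OF d] in simp)
    also have "\<dots> = K * d^2 * (\<Sum>n. 1 / (1 + real n * d)^2)"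
      by (rule suminf_mult[OF inv_sq_summable(1)]) (use d in auto)
    also have "\<dots> \<le> K * d^2 * ((1 + d) / d)"
      by (rule mult_left_mono[OF inv_sq_summable(2)]) (use d K0 in auto)
    also have "\<dots> = K * d * (1 + d)" using d by (simp add: field_simps power2_eq_square)
    finally have "\<bar>(\<Sum>n. d * f (real n * d) - a d n)\<bar> \<le> K * d * (1 + d)" .
    moreover have "(\<Sum>n. d * f (real n * d) - a d n) = d * (\<Sum>n. f (real n * d)) - integral {0..} f"
      using suminf_diff[OF sdf sums_summable[OF asums]] sums_unique[OF asums] suminf_mult[OF summ[OF d(1)], of d]
      by simp
    ultimately show "\<bar>d * (\<Sum>n. f (real n * d)) - integral {0..} f\<bar> \<le> K * d * (1 + d)" by simp
  qed
  show "f integrable_on {0..}" using fint[of 1] by simp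
  show "((\<lambda>d. d * (\<Sum>n. f (real n * d))) \<longlongrightarrow> integral {0..} f) (at_right 0)"
  proof (rule LIM_zero_cancel, rule Lim_null_comparison)
    show "\<forall>\<^sub>F d in at_right 0. norm (d * (\<Sum>n. f (real n * d)) - integral {0..} f) \<le> K * d * (1 + d)"
      unfolding eventually_at_right_field using err by (intro exI[of _ 1]) auto
    have "((\<lambda>d::real. K * d * (1 + d)) \<longlongrightarrow> K * 0 * (1 + 0)) (at_right 0)"
      by (intro tendsto_intros)
    then show "((\<lambda>d::real. K * d * (1 + d)) \<longlongrightarrow> 0) (at_right 0)" by simp
  qed
qed

lemma inv_sq_mono: "0 \<le> x \<Longrightarrow> x \<le> y \<Longrightarrow> 0 \<le> C \<Longrightarrow> C / (1 + y)^2 \<le> C / (1 + (x::real))^2"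
  by (intro divide_left_mono power_mono mult_pos_pos) auto

lemma inv_sq_prod: "0 \<le> (x::real) \<Longrightarrow> 0 \<le> c \<Longrightarrow> 0 \<le> A \<Longrightarrow> c / (1 + x)^2 * (A / (1 + x)^2) \<le> c * A / (1 + x)^2"
proof -
  assume x: "0 \<le> x" and c: "0 \<le> c" and A: "0 \<le> A"
  have "A / (1 + x)^2 \<le> A" using x A by (simp add: divide_le_eq) (metis mult_le_cancel_left1 one_le_power le_add_same_cancel1 order_le_less not_le A)
  then have "c / (1 + x)^2 * (A / (1 + x)^2) \<le> c / (1 + x)^2 * A"
    using c x by (intro mult_left_mono) auto
  then show ?thesis by simp
qed

lemma sq_diff_bound:
  fixes u v :: complex
  assumes "cmod u \<le> A" "cmod v \<le> A" "cmod (u - v) \<le> B"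
  shows "\<bar>(cmod u)^2 - (cmod v)^2\<bar> \<le> 2 * A * B"
proof -
  have "(cmod u)^2 - (cmod v)^2 = (cmod u - cmod v) * (cmod u + cmod v)"
    by (simp add: power2_eq_square algebra_simps)
  then have "\<bar>(cmod u)^2 - (cmod v)^2\<bar> = \<bar>cmod u - cmod v\<bar> * (cmod u + cmod v)"
    by (simp add: abs_mult)
  also have "\<dots> \<le> B * (2 * A)"
  proof (rule mult_mono)
    show "\<bar>cmod u - cmod v\<bar> \<le> B" using norm_triangle_ineq3[of u v] assms(3) by simp
  qed (use assms order_trans[OF norm_ge_zero assms(3)] in auto)
  finally show ?thesis by (simp add: mult.commute mult.left_commute)
qed

locale psi_ctx =
  fixes \<psi> \<psi>' \<psi>'' :: "real \<Rightarrow> complex" and C :: real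
  assumes d1: "\<And>x. x \<ge> 0 \<Longrightarrow> (\<psi> has_vector_derivative \<psi>' x) (at x within {0..})"
    and d2: "\<And>x. x \<ge> 0 \<Longrightarrow> (\<psi>' has_vector_derivative \<psi>'' x) (at x within {0..})"
    and zero: "\<psi> 0 = 0"
    and decay: "\<And>x. x \<ge> 0 \<Longrightarrow> cmod (\<psi> x) + cmod (\<psi>' x) + cmod (\<psi>'' x) \<le> C / (1 + x)^2"
begin

lemma C0: "0 \<le> C"
proof -
  have "cmod (\<psi> 0) + cmod (\<psi>' 0) + cmod (\<psi>'' 0) \<le> C" using decay[of 0] by simp
  then show ?thesis by (smt (verit) norm_ge_zero)
qed

lemma dec0: "x \<ge> 0 \<Longrightarrow> cmod (\<psi> x) \<le> C / (1 + x)^2"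
  and dec1: "x \<ge> 0 \<Longrightarrow> cmod (\<psi>' x) \<le> C / (1 + x)^2"
  and dec2: "x \<ge> 0 \<Longrightarrow> cmod (\<psi>'' x) \<le> C / (1 + x)^2"
  using decay[of x] norm_ge_zero[of "\<psi> x"] norm_ge_zero[of "\<psi>' x"] norm_ge_zero[of "\<psi>'' x"] by linarith+

lemma lip0: assumes "0 \<le> x" "x \<le> y" shows "cmod (\<psi> y - \<psi> x) \<le> C * (y - x) / (1 + x)^2"
proof -
  have "cmod (\<psi> y - \<psi> x) \<le> C / (1 + x)^2 * (y - x)"
  proof (rule mv_bound[OF assms(2)])
    show "(\<psi> has_vector_derivative \<psi>' t) (at t within {x..y})" if "t \<in> {x..y}" for t
      by (rule has_vector_derivative_within_subset[OF d1]) (use that assms in auto)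
    show "cmod (\<psi>' t) \<le> C / (1 + x)^2" if "t \<in> {x..y}" for t
      using dec1[of t] inv_sq_mono[of x t C] that assms C0 by auto
  qed
  then show ?thesis by simp
qed

lemma lip1: assumes "0 \<le> x" "x \<le> y" shows "cmod (\<psi>' y - \<psi>' x) \<le> C * (y - x) / (1 + x)^2"
proof -
  have "cmod (\<psi>' y - \<psi>' x) \<le> C / (1 + x)^2 * (y - x)"
  proof (rule mv_bound[OF assms(2)])
    show "(\<psi>' has_vector_derivative \<psi>'' t) (at t within {x..y})" if "t \<in> {x..y}" for t
      by (rule has_vector_derivative_within_subset[OF d2]) (use that assms in auto)
    show "cmod (\<psi>'' t) \<le> C / (1 + x)^2" if "t \<in> {x..y}" for t
      using dec2[of t] inv_sq_mono[of x t C] that assms C0 by auto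
  qed
  then show ?thesis by simp
qed

lemma taylor1:
  assumes "0 \<le> x" "x \<le> y" "x \<le> z" "z \<le> y"
  shows "cmod (\<psi> y - \<psi> x - complex_of_real (y - x) * \<psi>' z) \<le> C * (y - x)^2 / (1 + x)^2"
proof -
  define h where "h = (\<lambda>t. \<psi> t - complex_of_real t * \<psi>' z)"
  have "cmod (h y - h x) \<le> C * (y - x) / (1 + x)^2 * (y - x)"
  proof (rule mv_bound[OF assms(2)])
    show "(h has_vector_derivative (\<psi>' t - \<psi>' z)) (at t within {x..y})" if "t \<in> {x..y}" for t
    proof -
      have "(\<psi> has_vector_derivative \<psi>' t) (at t within {x..y})"
        by (rule has_vector_derivative_within_subset[OF d1]) (use that assms in auto)
      moreover have "((\<lambda>t. complex_of_real t * \<psi>' z) has_vector_derivative \<psi>' z) (at t within {x..y})"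
      proof -
        have "((\<lambda>t. t *\<^sub>R \<psi>' z) has_vector_derivative (t *\<^sub>R 0 + 1 *\<^sub>R \<psi>' z)) (at t within {x..y})"
          by (intro has_vector_derivative_scaleR DERIV_ident has_vector_derivative_const)
        then show ?thesis by (simp add: scaleR_conv_of_real)
      qed
      ultimately show ?thesis unfolding h_def by (rule has_vector_derivative_diff)
    qed
    show "cmod (\<psi>' t - \<psi>' z) \<le> C * (y - x) / (1 + x)^2" if "t \<in> {x..y}" for t
    proof (cases "t \<le> z")
      case True
      have "cmod (\<psi>' t - \<psi>' z) = cmod (\<psi>' z - \<psi>' t)" by (rule norm_minus_commute)
      also have "\<dots> \<le> C * (z - t) / (1 + t)^2" using lip1[of t z] True that assms by auto
      also have "\<dots> \<le> C * (y - x) / (1 + t)^2" using that assms C0 by (intro divide_right_mono mult_left_mono) auto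
      also have "\<dots> \<le> C * (y - x) / (1 + x)^2" using that assms C0 by (intro inv_sq_mono) auto
      finally show ?thesis .
    next
      case False
      have "cmod (\<psi>' t - \<psi>' z) \<le> C * (t - z) / (1 + z)^2" using lip1[of z t] False that assms by auto
      also have "\<dots> \<le> C * (y - x) / (1 + z)^2" using that assms C0 by (intro divide_right_mono mult_left_mono) auto
      also have "\<dots> \<le> C * (y - x) / (1 + x)^2" using that assms C0 by (intro inv_sq_mono) auto
      finally show ?thesis .
    qed
  qed
  moreover have "h y - h x = \<psi> y - \<psi> x - complex_of_real (y - x) * \<psi>' z"
    by (simp add: h_def algebra_simps)
  ultimately show ?thesis by (simp add: power2_eq_square mult.assoc)
qed

end

lemma riemann_sq:
  fixes g :: "real \<Rightarrow> complex" and C :: real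
  assumes C0: "0 \<le> C" and cont: "continuous_on {0..} g"
    and dec: "\<And>x. 0 \<le> x \<Longrightarrow> cmod (g x) \<le> C / (1 + x)^2"
    and lip: "\<And>x y. 0 \<le> x \<Longrightarrow> x \<le> y \<Longrightarrow> cmod (g y - g x) \<le> C * (y - x) / (1 + x)^2"
  shows "(\<lambda>x. (cmod (g x))^2) integrable_on {0..}"
    and "\<And>d. 0 < d \<Longrightarrow> summable (\<lambda>n. (cmod (g (real n * d)))^2)"
    and "((\<lambda>d. d * (\<Sum>n. (cmod (g (real n * d)))^2)) \<longlongrightarrow> integral {0..} (\<lambda>x. (cmod (g x))^2)) (at_right 0)"
proof -
  have nn: "\<And>x. 0 \<le> x \<Longrightarrow> 0 \<le> (cmod (g x))^2" by simp
  have ct: "continuous_on {0..} (\<lambda>x. (cmod (g x))^2)"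
    by (intro continuous_on_power continuous_on_norm cont)
  have bnd: "(cmod (g x))^2 \<le> 2 * C^2 / (1 + x)^2" if x: "0 \<le> x" for x
  proof -
    have "(cmod (g x))^2 = cmod (g x) * cmod (g x)" by (simp add: power2_eq_square)
    also have "\<dots> \<le> C / (1 + x)^2 * (C / (1 + x)^2)" using dec[OF x] order_trans[OF norm_ge_zero dec[OF x]] by (intro mult_mono) auto
    also have "\<dots> \<le> C * C / (1 + x)^2" by (rule inv_sq_prod) (use x C0 in auto)
    also have "\<dots> \<le> 2 * C^2 / (1 + x)^2" using C0 by (intro divide_right_mono) (auto simp: power2_eq_square)
    finally show ?thesis .
  qed
  have lp: "\<bar>(cmod (g y))^2 - (cmod (g x))^2\<bar> \<le> 2 * C^2 * (y - x) / (1 + x)^2"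
    if xy: "0 \<le> x" "x \<le> y" "y \<le> x + 1" for x y
  proof -
    have "cmod (g y) \<le> C / (1 + x)^2" using dec[of y] inv_sq_mono[of x y C] xy C0 by auto
    moreover have "cmod (g x) \<le> C / (1 + x)^2" using dec[of x] xy by auto
    ultimately have "\<bar>(cmod (g y))^2 - (cmod (g x))^2\<bar> \<le> 2 * (C / (1 + x)^2) * (C * (y - x) / (1 + x)^2)"
      using lip[of x y] xy by (intro sq_diff_bound) auto
    also have "\<dots> = 2 * (C / (1 + x)^2 * (C * (y - x) / (1 + x)^2))" by simp
    also have "\<dots> \<le> 2 * (C * (C * (y - x)) / (1 + x)^2)"
      using xy C0 by (intro mult_left_mono inv_sq_prod) auto
    also have "\<dots> = 2 * C^2 * (y - x) / (1 + x)^2" by (simp add: power2_eq_square)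
    finally show ?thesis .
  qed
  note R = riemann[of "\<lambda>x. (cmod (g x))^2" "2 * C^2", OF nn ct bnd lp]
  show "(\<lambda>x. (cmod (g x))^2) integrable_on {0..}" by (rule R(1))
  show "\<And>d. 0 < d \<Longrightarrow> summable (\<lambda>n. (cmod (g (real n * d)))^2)" by (rule R(2))
  show "((\<lambda>d. d * (\<Sum>n. (cmod (g (real n * d)))^2)) \<longlongrightarrow> integral {0..} (\<lambda>x. (cmod (g x))^2)) (at_right 0)"
    by (rule R(3))
qed

context psi_ctx begin

lemma cont0: "continuous_on {0..} \<psi>"
  unfolding continuous_on_eq_continuous_within
  using d1 has_vector_derivative_continuous by (metis atLeast_iff)

lemma cont1: "continuous_on {0..} \<psi>'"
  unfolding continuous_on_eq_continuous_within
  using d2 has_vector_derivative_continuous by (metis atLeast_iff)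

lemma R0: "(\<lambda>x. (cmod (\<psi> x))^2) integrable_on {0..}"
    "\<And>d. 0 < d \<Longrightarrow> summable (\<lambda>n. (cmod (\<psi> (real n * d)))^2)"
    "((\<lambda>d. d * (\<Sum>n. (cmod (\<psi> (real n * d)))^2)) \<longlongrightarrow> integral {0..} (\<lambda>x. (cmod (\<psi> x))^2)) (at_right 0)"
  using riemann_sq[of C \<psi>] C0 cont0 dec0 lip0 by blast+

lemma R1: "(\<lambda>x. (cmod (\<psi>' x))^2) integrable_on {0..}"
    "\<And>d. 0 < d \<Longrightarrow> summable (\<lambda>n. (cmod (\<psi>' (real n * d)))^2)"
    "((\<lambda>d. d * (\<Sum>n. (cmod (\<psi>' (real n * d)))^2)) \<longlongrightarrow> integral {0..} (\<lambda>x. (cmod (\<psi>' x))^2)) (at_right 0)"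
  using riemann_sq[of C \<psi>'] C0 cont1 dec1 lip1 by blast+

end

context psi_ctx begin

lemma Dq_bounds:
  assumes d: "0 < d"
  shows "cmod ((\<psi> (real (Suc n) * d) - \<psi> (real n * d)) / complex_of_real d) \<le> C / (1 + real n * d)^2"
    and "cmod ((\<psi> (real (Suc n) * d) - \<psi> (real n * d)) / complex_of_real d - \<psi>' (real n * d))
          \<le> C * d / (1 + real n * d)^2"
proof -
  define x where "x = real n * d"
  have x: "0 \<le> x" using d by (simp add: x_def)
  have e: "real (Suc n) * d = x + d" by (simp add: x_def algebra_simps)
  have "cmod (\<psi> (x + d) - \<psi> x) \<le> C * d / (1 + x)^2" using lip0[of x "x + d"] x d by simp
  then have "cmod (\<psi> (x + d) - \<psi> x) / d \<le> C * d / (1 + x)^2 / d" using d by (intro divide_right_mono) auto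
  then show "cmod ((\<psi> (real (Suc n) * d) - \<psi> (real n * d)) / complex_of_real d) \<le> C / (1 + real n * d)^2"
    using d unfolding e x_def[symmetric] by (simp add: norm_divide)
  have "cmod (\<psi> (x + d) - \<psi> x - complex_of_real d * \<psi>' x) \<le> C * d^2 / (1 + x)^2"
    using taylor1[of x "x + d" x] x d by simp
  then have "cmod (\<psi> (x + d) - \<psi> x - complex_of_real d * \<psi>' x) / d \<le> C * d^2 / (1 + x)^2 / d"
    using d by (intro divide_right_mono) auto
  moreover have "(\<psi> (x + d) - \<psi> x) / complex_of_real d - \<psi>' x = (\<psi> (x + d) - \<psi> x - complex_of_real d * \<psi>' x) / complex_of_real d"
    using d by (simp add: field_simps)
  ultimately show "cmod ((\<psi> (real (Suc n) * d) - \<psi> (real n * d)) / complex_of_real d - \<psi>' (real n * d))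
          \<le> C * d / (1 + real n * d)^2"
    using d unfolding e x_def[symmetric] by (simp add: norm_divide power2_eq_square)
qed

lemma E_lim:
  shows "\<And>d. 0 < d \<Longrightarrow> summable (\<lambda>n. (cmod ((\<psi> (real (Suc n) * d) - \<psi> (real n * d)) / complex_of_real d))^2)"
    and "((\<lambda>d. d * (\<Sum>n. (cmod ((\<psi> (real (Suc n) * d) - \<psi> (real n * d)) / complex_of_real d))^2))
      \<longlongrightarrow> integral {0..} (\<lambda>x. (cmod (\<psi>' x))^2)) (at_right 0)"
proof -
  define Dq where "Dq = (\<lambda>d n. (\<psi> (real (Suc n) * d) - \<psi> (real n * d)) / complex_of_real d)"
  have pw: "\<bar>(cmod (Dq d n))^2 - (cmod (\<psi>' (real n * d)))^2\<bar> \<le> 2 * C^2 * d * (1 / (1 + real n * d)^2)"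
    if d: "0 < d" for d n
  proof -
    have x: "0 \<le> real n * d" using d by simp
    have "\<bar>(cmod (Dq d n))^2 - (cmod (\<psi>' (real n * d)))^2\<bar>
        \<le> 2 * (C / (1 + real n * d)^2) * (C * d / (1 + real n * d)^2)"
      unfolding Dq_def using Dq_bounds[OF d, of n] dec1[OF x] by (intro sq_diff_bound) auto
    also have "\<dots> = 2 * (C / (1 + real n * d)^2 * (C * d / (1 + real n * d)^2))" by simp
    also have "\<dots> \<le> 2 * (C * (C * d) / (1 + real n * d)^2)"
      using x C0 d by (intro mult_left_mono inv_sq_prod) auto
    also have "\<dots> = 2 * C^2 * d * (1 / (1 + real n * d)^2)" by (simp add: power2_eq_square)
    finally show ?thesis .
  qed
  have sdiff: "summable (\<lambda>n. (cmod (Dq d n))^2 - (cmod (\<psi>' (real n * d)))^2)"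
    and bdiff: "\<bar>(\<Sum>n. (cmod (Dq d n))^2 - (cmod (\<psi>' (real n * d)))^2)\<bar> \<le> (\<Sum>n. 2 * C^2 * d * (1 / (1 + real n * d)^2))"
    if d: "0 < d" for d
    using abs_suminf_le[OF summable_mult[OF inv_sq_summable(1)[OF d]] pw[OF d]] by auto
  show sD: "summable (\<lambda>n. (cmod (Dq d n))^2)" if d: "0 < d" for d
    using summable_add[OF sdiff[OF d] R1(2)[OF d]] by simp
  have err: "norm (d * (\<Sum>n. (cmod (Dq d n))^2) - d * (\<Sum>n. (cmod (\<psi>' (real n * d)))^2)) \<le> 2 * C^2 * d * (1 + d)"
    if d: "0 < d" for d
  proof -
    have "d * (\<Sum>n. (cmod (Dq d n))^2) - d * (\<Sum>n. (cmod (\<psi>' (real n * d)))^2)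
        = d * (\<Sum>n. (cmod (Dq d n))^2 - (cmod (\<psi>' (real n * d)))^2)"
      using suminf_diff[OF sD[OF d] R1(2)[OF d]] by (simp add: right_diff_distrib[symmetric])
    then have "norm (d * (\<Sum>n. (cmod (Dq d n))^2) - d * (\<Sum>n. (cmod (\<psi>' (real n * d)))^2))
        = d * \<bar>\<Sum>n. (cmod (Dq d n))^2 - (cmod (\<psi>' (real n * d)))^2\<bar>"
      using d by (simp add: abs_mult)
    also have "\<dots> \<le> d * (\<Sum>n. 2 * C^2 * d * (1 / (1 + real n * d)^2))"
      using bdiff[OF d] d by (intro mult_left_mono) auto
    also have "\<dots> = d * (2 * C^2 * d * (\<Sum>n. 1 / (1 + real n * d)^2))"
      using suminf_mult[OF inv_sq_summable(1)[OF d], of "2 * C^2 * d"] by simp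
    also have "\<dots> \<le> d * (2 * C^2 * d * ((1 + d) / d))"
      using inv_sq_summable(2)[OF d] d C0 by (intro mult_left_mono) auto
    also have "\<dots> = 2 * C^2 * d * (1 + d)" using d by (simp add: field_simps)
    finally show ?thesis .
  qed
  have "((\<lambda>d. d * (\<Sum>n. (cmod (Dq d n))^2) - d * (\<Sum>n. (cmod (\<psi>' (real n * d)))^2)) \<longlongrightarrow> 0) (at_right 0)"
  proof (rule Lim_null_comparison)
    show "\<forall>\<^sub>F d in at_right 0. norm (d * (\<Sum>n. (cmod (Dq d n))^2) - d * (\<Sum>n. (cmod (\<psi>' (real n * d)))^2)) \<le> 2 * C^2 * d * (1 + d)"
      unfolding eventually_at_right_field using err by (intro exI[of _ 1]) auto
    have "((\<lambda>d::real. 2 * C^2 * d * (1 + d)) \<longlongrightarrow> 2 * C^2 * 0 * (1 + 0)) (at_right 0)"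
      by (intro tendsto_intros)
    then show "((\<lambda>d::real. 2 * C^2 * d * (1 + d)) \<longlongrightarrow> 0) (at_right 0)" by simp
  qed
  from tendsto_add[OF this R1(3)]
  show "((\<lambda>d. d * (\<Sum>n. (cmod ((\<psi> (real (Suc n) * d) - \<psi> (real n * d)) / complex_of_real d))^2))
      \<longlongrightarrow> integral {0..} (\<lambda>x. (cmod (\<psi>' x))^2)) (at_right 0)"
    unfolding Dq_def by simp
qed

end

context psi_ctx begin

definition Dl :: "real \<Rightarrow> nat \<Rightarrow> complex" where
  "Dl d n = (if n = 0 then 0 else \<psi> (real (n - 1) * d)) - 2 * \<psi> (real n * d) + \<psi> (real (Suc n) * d)"

lemma Dl_bound:
  assumes d: "0 < d" "d \<le> 1"
  shows "(cmod (Dl d n))^2 \<le> (if n = 0 then C^2 * d^2 else 0) + 64 * C^2 * d^4 * (1 / (1 + real n * d)^2)"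
proof (cases n)
  case 0
  have "cmod (\<psi> d - \<psi> 0) \<le> C * (d - 0) / (1 + 0)^2" using lip0[of 0 d] d by simp
  then have "cmod (Dl d n) \<le> C * d" using 0 zero by (simp add: Dl_def)
  then have "(cmod (Dl d n))^2 \<le> (C * d)^2" by (simp add: power_mono)
  then have A: "(cmod (Dl d n))^2 \<le> C^2 * d^2" by (simp add: power_mult_distrib)
  have B: "0 \<le> 64 * C^2 * d^4" using d by simp
  have "(cmod (Dl d n))^2 \<le> C^2 * d^2 + 64 * C^2 * d^4" using A B by linarith
  then show ?thesis using 0 by simp
next
  case (Suc m)
  define x0 where "x0 = real m * d"
  have x0: "0 \<le> x0" using d by (simp add: x0_def)
  have e1: "real n * d = x0 + d" "real (Suc n) * d = x0 + d + d" "real (n - 1) * d = x0"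
    using Suc by (simp_all add: x0_def algebra_simps)
  have De: "Dl d n = (\<psi> (x0 + d + d) - \<psi> (x0 + d) - complex_of_real d * \<psi>' (x0 + d))
       - (\<psi> (x0 + d) - \<psi> x0 - complex_of_real d * \<psi>' (x0 + d))"
    unfolding Dl_def using Suc e1 by simp
  have t1: "cmod (\<psi> (x0 + d + d) - \<psi> (x0 + d) - complex_of_real d * \<psi>' (x0 + d)) \<le> C * d^2 / (1 + (x0 + d))^2"
    using taylor1[of "x0 + d" "x0 + d + d" "x0 + d"] x0 d by simp
  also have "\<dots> \<le> C * d^2 / (1 + x0)^2" using x0 d C0 by (intro inv_sq_mono) auto
  finally have t1': "cmod (\<psi> (x0 + d + d) - \<psi> (x0 + d) - complex_of_real d * \<psi>' (x0 + d)) \<le> C * d^2 / (1 + x0)^2" .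
  have t2: "cmod (\<psi> (x0 + d) - \<psi> x0 - complex_of_real d * \<psi>' (x0 + d)) \<le> C * d^2 / (1 + x0)^2"
    using taylor1[of x0 "x0 + d" "x0 + d"] x0 d by simp
  have "cmod (Dl d n) \<le> C * d^2 / (1 + x0)^2 + C * d^2 / (1 + x0)^2"
    unfolding De using order_trans[OF norm_triangle_ineq4 add_mono[OF t1' t2]] .
  also have "\<dots> = 2 * (C * d^2) / (1 + x0)^2" by simp
  also have "\<dots> \<le> 8 * (C * d^2) / (1 + real n * d)^2"
  proof -
    have "(1 + real n * d)^2 \<le> (2 * (1 + x0))^2" unfolding e1 using x0 d by (intro power_mono) auto
    moreover have "(2 * (1 + x0))^2 = 4 * (1 + x0)^2" by (simp add: power2_eq_square algebra_simps)
    ultimately have "(1 + real n * d)^2 \<le> 4 * (1 + x0)^2" by simp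
    then have "1 / (1 + x0)^2 \<le> 4 / (1 + real n * d)^2"
    proof -
      have p: "0 < (1 + x0)^2" "0 < (1 + real n * d)^2" using x0 d by simp (smt (verit) d(1) of_nat_0_le_iff mult_nonneg_nonneg zero_less_power)
      show ?thesis using p \<open>(1 + real n * d)^2 \<le> 4 * (1 + x0)^2\<close> by (simp add: divide_simps)
    qed
    then have "2 * (C * d^2) * (1 / (1 + x0)^2) \<le> 2 * (C * d^2) * (4 / (1 + real n * d)^2)"
      using C0 by (intro mult_left_mono) auto
    then show ?thesis by simp
  qed
  finally have b: "cmod (Dl d n) \<le> 8 * (C * d^2) / (1 + real n * d)^2" .
  have "(cmod (Dl d n))^2 = cmod (Dl d n) * cmod (Dl d n)" by (simp add: power2_eq_square)
  also have "\<dots> \<le> 8 * (C * d^2) / (1 + real n * d)^2 * (8 * (C * d^2) / (1 + real n * d)^2)"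
    using b order_trans[OF norm_ge_zero b] by (intro mult_mono) auto
  also have "\<dots> \<le> 8 * (C * d^2) * (8 * (C * d^2)) / (1 + real n * d)^2"
    using d C0 by (intro inv_sq_prod) auto
  also have "\<dots> = 64 * C^2 * d^4 * (1 / (1 + real n * d)^2)" by (simp add: power2_eq_square power4_eq_xxxx)
  finally show ?thesis using Suc by simp
qed

lemma Q_lim:
  shows "\<And>d. 0 < d \<Longrightarrow> d \<le> 1 \<Longrightarrow> summable (\<lambda>n. (cmod (Dl d n))^2)"
    and "((\<lambda>d. (\<Sum>n. (cmod (Dl d n))^2) / d) \<longlongrightarrow> 0) (at_right 0)"
proof -
  have sg: "(\<lambda>n. (if n = 0 then C^2 * d^2 else 0) + 64 * C^2 * d^4 * (1 / (1 + real n * d)^2))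
      sums (C^2 * d^2 + 64 * C^2 * d^4 * (\<Sum>n. 1 / (1 + real n * d)^2))" if d: "0 < d" for d
    using sums_add[OF sums_single[of 0 "\<lambda>_. C^2 * d^2"] sums_mult[OF summable_sums[OF inv_sq_summable(1)[OF d]], of "64 * C^2 * d^4"]]
    by simp
  show sQ: "summable (\<lambda>n. (cmod (Dl d n))^2)" if d: "0 < d" "d \<le> 1" for d
    by (rule summable_comparison_test[OF _ sums_summable[OF sg[OF d(1)]]]) (use Dl_bound[OF d] in auto)
  have bQ: "norm ((\<Sum>n. (cmod (Dl d n))^2) / d) \<le> C^2 * d + 64 * C^2 * d^2 * (1 + d)"
    if d: "0 < d" "d \<le> 1" for d
  proof -
    have "(\<Sum>n. (cmod (Dl d n))^2) \<le> C^2 * d^2 + 64 * C^2 * d^4 * (\<Sum>n. 1 / (1 + real n * d)^2)"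
      using suminf_le[OF Dl_bound[OF d] sQ[OF d] sums_summable[OF sg[OF d(1)]]] sums_unique[OF sg[OF d(1)]]
      by simp
    also have "\<dots> \<le> C^2 * d^2 + 64 * C^2 * d^4 * ((1 + d) / d)"
      using inv_sq_summable(2)[OF d(1)] d by (intro add_left_mono mult_left_mono) auto
    finally have "(\<Sum>n. (cmod (Dl d n))^2) / d \<le> (C^2 * d^2 + 64 * C^2 * d^4 * ((1 + d) / d)) / d"
      using d by (intro divide_right_mono) auto
    also have "\<dots> = C^2 * d + 64 * C^2 * d^2 * (1 + d)" using d by (simp add: field_simps power2_eq_square power4_eq_xxxx)
    finally have "(\<Sum>n. (cmod (Dl d n))^2) / d \<le> C^2 * d + 64 * C^2 * d^2 * (1 + d)" .
    moreover have "0 \<le> (\<Sum>n. (cmod (Dl d n))^2) / d" using d suminf_nonneg[OF sQ[OF d]] by simp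
    ultimately show ?thesis by simp
  qed
  show "((\<lambda>d. (\<Sum>n. (cmod (Dl d n))^2) / d) \<longlongrightarrow> 0) (at_right 0)"
  proof (rule Lim_null_comparison)
    show "\<forall>\<^sub>F d in at_right 0. norm ((\<Sum>n. (cmod (Dl d n))^2) / d) \<le> C^2 * d + 64 * C^2 * d^2 * (1 + d)"
      unfolding eventually_at_right_field using bQ by (intro exI[of _ 1]) auto
    have "((\<lambda>d::real. C^2 * d + 64 * C^2 * d^2 * (1 + d)) \<longlongrightarrow> C^2 * 0 + 64 * C^2 * 0^2 * (1 + 0)) (at_right 0)"
      by (intro tendsto_intros)
    then show "((\<lambda>d::real. C^2 * d + 64 * C^2 * d^2 * (1 + d)) \<longlongrightarrow> 0) (at_right 0)" by simp
  qed
qed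

end

theorem mainTheorem6:
  fixes V :: "nat \<Rightarrow> nat \<Rightarrow> complex"
    and \<psi> \<psi>' \<psi>'' :: "real \<Rightarrow> complex"
    and C :: real
  assumes unitary: "qubit_unitary V"
    and d1: "\<And>x. x \<ge> 0 \<Longrightarrow> (\<psi> has_vector_derivative \<psi>' x) (at x within {0..})"
    and d2: "\<And>x. x \<ge> 0 \<Longrightarrow> (\<psi>' has_vector_derivative \<psi>'' x) (at x within {0..})"
    and cont2: "continuous_on {0..} \<psi>''"
    and zero: "\<psi> 0 = 0"
    and norm: "((\<lambda>x. (cmod (\<psi> x))^2) has_integral 1) {0..}"
    and decay: "\<And>x. x \<ge> 0 \<Longrightarrow> cmod (\<psi> x) + cmod (\<psi>' x) + cmod (\<psi>'' x) \<le> C / (1 + x)^2"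
  shows "((\<lambda>\<delta>. choi_infidelity V (beta_state \<psi> \<delta>) / \<delta>^2)
            \<longlongrightarrow> (cmod (V 0 1))^2 * UD \<psi>') (at_right 0)"
proof -
  interpret P: psi_ctx \<psi> \<psi>' \<psi>'' C
    by unfold_locales (auto intro: d1 d2 decay simp: zero)
  define p where "p = (cmod (V 0 1))^2"
  define S where "S = (\<lambda>d. \<Sum>k. (cmod (\<psi> (real k * d)))^2)"
  define Dq where "Dq = (\<lambda>d n. (\<psi> (real (Suc n) * d) - \<psi> (real n * d)) / complex_of_real d)"
  define E where "E = (\<lambda>d. d * (\<Sum>n. (cmod (Dq d n))^2))"
  define Q where "Q = (\<lambda>d. (\<Sum>n. (cmod (P.Dl d n))^2) / d)"
  have I1: "integral {0..} (\<lambda>x. (cmod (\<psi> x))^2) = 1" using norm by (rule integral_unique)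
  have hS: "((\<lambda>d. d * S d) \<longlongrightarrow> 1) (at_right 0)" using P.R0(3) unfolding I1 S_def .
  have hE: "(E \<longlongrightarrow> UD \<psi>') (at_right 0)" using P.E_lim(2) unfolding E_def Dq_def UD_def .
  have hQ: "(Q \<longlongrightarrow> 0) (at_right 0)" using P.Q_lim(2) unfolding Q_def .
  have lim: "((\<lambda>d. p * E d / (d * S d) - p^2 / 4 * Q d / (d * S d)) \<longlongrightarrow> p * UD \<psi>' / 1 - p^2 / 4 * 0 / 1) (at_right 0)"
    by (intro tendsto_intros hS hE hQ) auto
  have ev: "eventually (\<lambda>d. 0 < d \<and> d \<le> 1 \<and> 0 < d * S d) (at_right 0)"
  proof -
    have "eventually (\<lambda>d::real. 0 < d \<and> d \<le> 1) (at_right 0)"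
      unfolding eventually_at_right_field by (intro exI[of _ 1]) auto
    moreover have "eventually (\<lambda>d. 0 < d * S d) (at_right 0)"
      using order_tendstoD(1)[OF hS, of 0] by simp
    ultimately show ?thesis by eventually_elim auto
  qed
  have key: "p * E d / (d * S d) - p^2 / 4 * Q d / (d * S d) = choi_infidelity V (beta_state \<psi> d) / d^2"
    if d: "0 < d" "d \<le> 1" "0 < d * S d" for d
  proof -
    have Spos: "0 < S d" using d by (simp add: zero_less_mult_iff)
    define c where "c = 1 / sqrt (S d)"
    have c2: "c^2 = 1 / S d" using Spos by (simp add: c_def power_divide)
    define b where "b = beta_state \<psi> d"
    have bn: "b n = complex_of_real c * \<psi> (real n * d)" for n
      unfolding b_def beta_state_def c_def S_def ..
    have b0: "b 0 = 0" using zero by (simp add: bn)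
    have bsq: "(cmod (b n))^2 = c^2 * (cmod (\<psi> (real n * d)))^2" for n
      by (simp add: bn norm_mult power_mult_distrib)
    have sb: "summable (\<lambda>n. (cmod (b n))^2)"
      unfolding bsq by (rule summable_mult[OF P.R0(2)[OF d(1)]])
    have sumb: "(\<Sum>n. (cmod (b n))^2) = 1"
      unfolding bsq suminf_mult[OF P.R0(2)[OF d(1)]] using Spos by (simp add: c2 S_def)
    have esq: "(cmod (b (Suc n) - b n))^2 = (c^2 * d^2) * (cmod (Dq d n))^2" for n
    proof -
      have dn: "complex_of_real d \<noteq> 0" using d by simp
      have "complex_of_real (c * d) * Dq d n = complex_of_real c * (\<psi> (real (Suc n) * d) - \<psi> (real n * d))"
        unfolding Dq_def of_real_mult using dn by (simp add: field_simps)
      then have "b (Suc n) - b n = complex_of_real (c * d) * Dq d n"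
        by (simp add: bn right_diff_distrib)
      then show ?thesis by (simp add: norm_mult power_mult_distrib)
    qed
    have sume: "(\<Sum>n. (cmod (b (Suc n) - b n))^2) = c^2 * d * E d"
    proof -
      have "(\<Sum>n. (c^2 * d^2) * (cmod (Dq d n))^2) = (c^2 * d^2) * (\<Sum>n. (cmod (Dq d n))^2)"
        by (rule suminf_mult) (use P.E_lim(1)[OF d(1)] in \<open>simp add: Dq_def\<close>)
      then show ?thesis unfolding esq E_def by (simp add: power2_eq_square)
    qed
    have dsq: "(cmod (shiftb b n - 2 * b n + b (Suc n)))^2 = c^2 * (cmod (P.Dl d n))^2" for n
    proof -
      have "shiftb b n - 2 * b n + b (Suc n) = complex_of_real c * P.Dl d n"
        by (simp add: shiftb_def P.Dl_def bn algebra_simps)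
      then show ?thesis by (simp add: norm_mult power_mult_distrib)
    qed
    have sumd: "(\<Sum>n. (cmod (shiftb b n - 2 * b n + b (Suc n)))^2) = c^2 * d * Q d"
      unfolding dsq suminf_mult[OF P.Q_lim(1)[OF d(1,2)]] Q_def using d by simp
    have "choi_infidelity V b = p * (c^2 * d * E d) - p^2 / 4 * (c^2 * d * Q d)"
      using choi_formula[OF unitary b0 sb] unfolding sumb sume sumd p_def by simp
    then have "choi_infidelity V b / d^2 = p * (c^2 * d * E d) / d^2 - p^2 / 4 * (c^2 * d * Q d) / d^2"
      by (simp add: diff_divide_distrib)
    also have "\<dots> = p * E d / (d * S d) - p^2 / 4 * Q d / (d * S d)"
      using d Spos unfolding c2 by (simp add: field_simps power2_eq_square)
    finally show ?thesis unfolding b_def by simp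
  qed
  have "((\<lambda>d. choi_infidelity V (beta_state \<psi> d) / d^2) \<longlongrightarrow> p * UD \<psi>' / 1 - p^2 / 4 * 0 / 1) (at_right 0)"
    by (rule Lim_transform_eventually[OF lim]) (use ev key in \<open>auto elim!: eventually_mono\<close>)
  then show ?thesis by (simp add: p_def)
qed

end
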